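(* Let $T$ be the BFS tree produced by temporal BFS on a temporal graph $G=(V,E)$ from source $s$ with starting time $t_s$, let $v\neq s$, and let $v_o$ be an occurrence of $v$ in $T$ with level $d$ and time $\tau$. Then $\tau$ is the earliest time at which $s$ can reach $v$ within $d$ hops starting from $t_s$, i.e. $\tau=\min\{t_{end}(P)\}$ where $P$ ranges over all temporal paths from $s$ to $v$ starting at or after $t_s$ with at most $d$ hops.
   Context: A temporal graph is a pair $G=(V,E)$ where $V$ is a finite set of vertices and $E$ is a finite set of temporal edges, i.e. triples $(u,v,t)$ with $u,v\in V$, $u\neq v$, $t\in\mathbb{R}$ (the time at which the edge is active); distinct elements of $E$ are distinct triples. Fix $t_s\in\mathbb{R}$ and $s\in V$. A temporal path from $x$ to $y$ (starting at or after $t_s$) is a sequence $P=\langle (w_1,w_2,t_1),\dots,(w_k,w_{k+1},t_k)\rangle$ of $k\ge1$ edges of $E$ with $w_1=x$, $w_{k+1}=y$ and $t_s\le t_1\le t_2\le\dots\le t_k$; its number of hops is $k$ and $t_{end}(P)=t_k$. Temporal BFS. Records are tuples $(x,d,\tau,p)$ (vertex $x$, level $d$, time $\tau$, predecessor record $p$ or none); every record ever created is an occurrence (node) of the BFS tree $T$, rooted at the initial record, with a tree edge from the predecessor record to the record; the level and time of an occurrence are the final values of its fields. For each $x\in V$ a current value $\sigma(x)$ is kept, initially $\infty$, and set to $\tau$ whenever a record of $x$ is created or its time is updated to $\tau$. Initially the FIFO queue $Q$ contains only $(s,0,t_s,\text{none})$ and $\sigma(s)=t_s$; no edge is traversed.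 While $Q\neq\emptyset$: pop the front record $R=(u,d_u,\sigma_u,p_u)$; let $B$ be the set of edges $(u,v,t)\in E$ not yet traversed with $\sigma_u\le t$; for each vertex $v$ such that $B$ contains an edge to $v$ (in any order), let $e=(u,v,t)$ be the edge of $B$ to $v$ with smallest $t$, mark $e$ traversed, and: (i) if $Q$ contains no record of $v$ and $\sigma(v)>t$, create $(v,d_u+1,t,R)$ and append it to $Q$; (ii) if $Q$ contains a record of $v$ with level $d_u+1$ and $\sigma(v)>t$, set that record's time to $t$ and predecessor to $R$; (iii) if $Q$ contains a record of $v$ but none with level $d_u+1$, and $\sigma(v)>t$, create $(v,d_u+1,t,R)$ and append it to $Q$. *)

theory Defs
  imports Main "HOL-Library.Extended_Real"
begin

type_synonym 'v tedge = "'v \<times> 'v \<times> real"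

definition src :: "'v tedge \<Rightarrow> 'v" where "src e = fst e"
definition dst :: "'v tedge \<Rightarrow> 'v" where "dst e = fst (snd e)"
definition tm  :: "'v tedge \<Rightarrow> real" where "tm e = snd (snd e)"

definition temporal_path :: "'v tedge set \<Rightarrow> real \<Rightarrow> 'v \<Rightarrow> 'v \<Rightarrow> 'v tedge list \<Rightarrow> bool" where
  "temporal_path E ts x y P \<longleftrightarrow>
     P \<noteq> [] \<and> set P \<subseteq> E \<and> src (hd P) = x \<and> dst (last P) = y \<and>
     (\<forall>i. Suc i < length P \<longrightarrow> dst (P ! i) = src (P ! Suc i)) \<and>
     ts \<le> tm (hd P) \<and> sorted (map tm P)"

definition t_end :: "'v tedge list \<Rightarrow> real" where "t_end P = tm (last P)"

(* BFS records (vertex, level, time, predecessor record index); a record is identified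
   by its index in the list of all records ever created (= the occurrences of T). *)
type_synonym 'v brec = "'v \<times> nat \<times> real \<times> nat option"

definition rvert :: "'v brec \<Rightarrow> 'v" where "rvert R = fst R"
definition rlev :: "'v brec \<Rightarrow> nat" where "rlev R = fst (snd R)"
definition rtime :: "'v brec \<Rightarrow> real" where "rtime R = fst (snd (snd R))"

record 'v bstate =
  recs :: "'v brec list"
  bq   :: "nat list"
  trav :: "'v tedge set"
  sig  :: "'v \<Rightarrow> ereal"

definition tbfs_init :: "'v \<Rightarrow> real \<Rightarrow> 'v bstate" where
  "tbfs_init s ts = \<lparr>recs = [(s, 0, ts, None)], bq = [0], trav = {},
                      sig = (\<lambda>_. \<infinity>)(s := ereal ts)\<rparr>"

definition handle :: "'v tedge set \<Rightarrow> nat \<Rightarrow> 'v \<Rightarrow> 'v bstate \<Rightarrow> 'v bstate" where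
  "handle B r v st =
     (let u = rvert (recs st ! r); du = rlev (recs st ! r);
          t = Min {tm e | e. e \<in> B \<and> dst e = v};
          st1 = st\<lparr>trav := insert (u, v, t) (trav st)\<rparr>;
          newrec = (v, Suc du, t, Some r);
          create = st1\<lparr>recs := recs st @ [newrec], bq := bq st @ [length (recs st)],
                       sig := (sig st)(v := ereal t)\<rparr>
      in if \<not> (\<exists>i\<in>set (bq st). rvert (recs st ! i) = v) \<and> ereal t < sig st v then create
         else if (\<exists>i\<in>set (bq st). rvert (recs st ! i) = v \<and> rlev (recs st ! i) = Suc du)
                 \<and> ereal t < sig st v then
           (let i = (SOME i. i \<in> set (bq st) \<and> rvert (recs st ! i) = v \<and> rlev (recs st ! i) = Suc du)
            in st1\<lparr>recs := (recs st)[i := newrec], sig := (sig st)(v := ereal t)\<rparr>)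
         else if (\<exists>i\<in>set (bq st). rvert (recs st ! i) = v)
                 \<and> \<not> (\<exists>i\<in>set (bq st). rvert (recs st ! i) = v \<and> rlev (recs st ! i) = Suc du)
                 \<and> ereal t < sig st v then create
         else st1)"

inductive tbfs_step :: "'v tedge set \<Rightarrow> 'v bstate \<Rightarrow> 'v bstate \<Rightarrow> bool" for E where
  "bq st = r # rest \<Longrightarrow>
   B = {e \<in> E. src e = rvert (recs st ! r) \<and> e \<notin> trav st \<and> rtime (recs st ! r) \<le> tm e} \<Longrightarrow>
   distinct vs \<Longrightarrow> set vs = dst ` B \<Longrightarrow>
   tbfs_step E st (fold (handle B r) vs (st\<lparr>bq := rest\<rparr>))"

end

theory Submission
  imports Defs
begin

lemma edge_simps[simp]: "src (u,v,t) = u" "dst (u,v,t) = v" "tm (u,v,t) = t"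
  by (simp_all add: src_def dst_def tm_def)

lemma rec_simps[simp]: "rvert (v,d,t,p) = v" "rlev (v,d,t,p) = d" "rtime (v,d,t,p) = t"
  by (simp_all add: rvert_def rlev_def rtime_def)

lemma edge_eta: "(src e, dst e, tm e) = e"
  by (simp add: src_def dst_def tm_def)

definition has :: "'v bstate \<Rightarrow> 'v \<Rightarrow> nat \<Rightarrow> real \<Rightarrow> bool" where
  "has st w k T \<longleftrightarrow> (\<exists>j<length (recs st). rvert (recs st ! j) = w \<and> rlev (recs st ! j) \<le> k \<and> rtime (recs st ! j) \<le> T)"

definition clos :: "'v tedge set \<Rightarrow> 'v bstate \<Rightarrow> nat \<Rightarrow> bool" where
  "clos E st a \<longleftrightarrow> (\<forall>e\<in>E. src e = rvert (recs st ! a) \<and> rtime (recs st ! a) \<le> tm e \<longrightarrow>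
       has st (dst e) (Suc (rlev (recs st ! a))) (tm e))"

definition base :: "'v tedge set \<Rightarrow> 'v \<Rightarrow> real \<Rightarrow> 'v bstate \<Rightarrow> bool" where
"base E s ts st \<longleftrightarrow>
  0 < length (recs st) \<and> recs st ! 0 = (s,0,ts,None) \<and>
  (\<forall>a<length (recs st). rvert (recs st ! a) = s \<longrightarrow> a = 0) \<and>
  sig st s = ereal ts \<and>
  (\<forall>a<length (recs st). ts \<le> rtime (recs st ! a)) \<and>
  distinct (bq st) \<and> set (bq st) \<subseteq> {..<length (recs st)} \<and>
  (\<forall>a<length (recs st). sig st (rvert (recs st ! a)) \<le> ereal (rtime (recs st ! a))) \<and>
  (\<forall>w. sig st w = \<infinity> \<or> (\<exists>a<length (recs st). rvert (recs st ! a) = w \<and> sig st w = ereal (rtime (recs st ! a)))) \<and>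
  (\<forall>a<length (recs st). \<forall>b<length (recs st). rvert (recs st ! a) = rvert (recs st ! b) \<and> rlev (recs st ! a) = rlev (recs st ! b) \<longrightarrow> a = b) \<and>
  (\<forall>a<length (recs st). \<forall>b<length (recs st). rvert (recs st ! a) = rvert (recs st ! b) \<and> rlev (recs st ! a) < rlev (recs st ! b) \<longrightarrow> rtime (recs st ! b) \<le> rtime (recs st ! a)) \<and>
  (\<forall>a<length (recs st). rvert (recs st ! a) \<noteq> s \<longrightarrow> (\<exists>P. temporal_path E ts s (rvert (recs st ! a)) P \<and> length P \<le> rlev (recs st ! a) \<and> t_end P = rtime (recs st ! a))) \<and>
  (\<forall>e\<in>trav st. (\<exists>a0<length (recs st). a0 \<notin> set (bq st) \<and> rvert (recs st ! a0) = src e \<and> rtime (recs st ! a0) \<le> tm e) \<and>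
      (\<forall>a<length (recs st). rvert (recs st ! a) = src e \<and> rtime (recs st ! a) \<le> tm e \<longrightarrow> has st (dst e) (Suc (rlev (recs st ! a))) (tm e)))"

definition binv :: "'v tedge set \<Rightarrow> 'v \<Rightarrow> real \<Rightarrow> 'v bstate \<Rightarrow> bool" where
"binv E s ts st \<longleftrightarrow> base E s ts st \<and>
   sorted (map (\<lambda>b. rlev (recs st ! b)) (bq st)) \<and>
   (\<forall>a<length (recs st). \<forall>b\<in>set (bq st). rlev (recs st ! a) \<le> Suc (rlev (recs st ! b))) \<and>
   (\<forall>a<length (recs st). a \<notin> set (bq st) \<longrightarrow> (\<forall>b\<in>set (bq st). rlev (recs st ! a) \<le> rlev (recs st ! b))) \<and>
   (\<forall>a<length (recs st). a \<notin> set (bq st) \<longrightarrow> clos E st a)"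

definition fi :: "'v tedge set \<Rightarrow> 'v \<Rightarrow> real \<Rightarrow> nat \<Rightarrow> 'v brec \<Rightarrow> 'v bstate \<Rightarrow> bool" where
"fi E s ts r R st \<longleftrightarrow> base E s ts st \<and> r < length (recs st) \<and> recs st ! r = R \<and> r \<notin> set (bq st) \<and>
   sorted (map (\<lambda>b. rlev (recs st ! b)) (bq st)) \<and>
   (\<forall>b\<in>set (bq st). rlev R \<le> rlev (recs st ! b) \<and> rlev (recs st ! b) \<le> Suc (rlev R)) \<and>
   (\<forall>a<length (recs st). rlev (recs st ! a) \<le> Suc (rlev R)) \<and>
   (\<forall>a<length (recs st). a \<notin> set (bq st) \<longrightarrow> rlev (recs st ! a) \<le> rlev R) \<and>
   (\<forall>a<length (recs st). a \<notin> set (bq st) \<and> a \<noteq> r \<longrightarrow> clos E st a)"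

lemma handle_noimp:
  assumes "\<not> ereal t < sig st v" "t = Min {tm e | e. e \<in> B \<and> dst e = v}"
  shows "handle B r v st = st\<lparr>trav := insert (rvert (recs st ! r), v, t) (trav st)\<rparr>"
  using assms by (simp add: handle_def Let_def)

lemma handle_create:
  assumes "ereal t < sig st v" "t = Min {tm e | e. e \<in> B \<and> dst e = v}"
    "\<not>(\<exists>i\<in>set (bq st). rvert (recs st ! i) = v \<and> rlev (recs st ! i) = Suc (rlev (recs st ! r)))"
  shows "handle B r v st = st\<lparr>trav := insert (rvert (recs st ! r), v, t) (trav st),
     recs := recs st @ [(v, Suc (rlev (recs st ! r)), t, Some r)], bq := bq st @ [length (recs st)],
     sig := (sig st)(v := ereal t)\<rparr>"
  using assms by (auto simp add: handle_def Let_def)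

lemma handle_update:
  assumes "ereal t < sig st v" "t = Min {tm e | e. e \<in> B \<and> dst e = v}"
    "i = (SOME i. i \<in> set (bq st) \<and> rvert (recs st ! i) = v \<and> rlev (recs st ! i) = Suc (rlev (recs st ! r)))"
    "\<exists>i\<in>set (bq st). rvert (recs st ! i) = v \<and> rlev (recs st ! i) = Suc (rlev (recs st ! r))"
  shows "handle B r v st = st\<lparr>trav := insert (rvert (recs st ! r), v, t) (trav st),
     recs := (recs st)[i := (v, Suc (rlev (recs st ! r)), t, Some r)], 
     sig := (sig st)(v := ereal t)\<rparr>"
  using assms by (auto simp add: handle_def Let_def)


definition mono_st :: "'v bstate \<Rightarrow> 'v bstate \<Rightarrow> bool" where
  "mono_st st st' \<longleftrightarrow> length (recs st) \<le> length (recs st') \<and>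
    (\<forall>j<length (recs st). rvert (recs st' ! j) = rvert (recs st ! j) \<and> rlev (recs st' ! j) = rlev (recs st ! j)
       \<and> rtime (recs st' ! j) \<le> rtime (recs st ! j))"

lemma mono_st_refl: "mono_st st st" by (simp add: mono_st_def)
lemma mono_st_trans: "mono_st a b \<Longrightarrow> mono_st b c \<Longrightarrow> mono_st a c"
proof -
  assume ab: "mono_st a b" and bc: "mono_st b c"
  show ?thesis unfolding mono_st_def
  proof (intro conjI allI impI)
    show "length (recs a) \<le> length (recs c)" using ab bc by (simp add: mono_st_def)
  next
    fix j assume j: "j < length (recs a)"
    then have j2: "j < length (recs b)" using ab by (simp add: mono_st_def)
    show "rvert (recs c ! j) = rvert (recs a ! j)" using ab bc j j2 by (simp add: mono_st_def)
    show "rlev (recs c ! j) = rlev (recs a ! j)" using ab bc j j2 by (simp add: mono_st_def)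
    have "rtime (recs c ! j) \<le> rtime (recs b ! j)" using bc j2 by (simp add: mono_st_def)
    also have "\<dots> \<le> rtime (recs a ! j)" using ab j by (simp add: mono_st_def)
    finally show "rtime (recs c ! j) \<le> rtime (recs a ! j)" .
  qed
qed

lemma has_mono: "has st w k T \<Longrightarrow> mono_st st st' \<Longrightarrow> has st' w k T"
proof -
  assume h: "has st w k T" and m: "mono_st st st'"
  then obtain j where j: "j<length (recs st)" "rvert (recs st ! j) = w" "rlev (recs st ! j) \<le> k" "rtime (recs st ! j) \<le> T"
    unfolding has_def by blast
  have "j < length (recs st')" "rvert (recs st' ! j) = w" "rlev (recs st' ! j) \<le> k" "rtime (recs st' ! j) \<le> rtime (recs st ! j)"
    using m j unfolding mono_st_def by auto
  then show ?thesis unfolding has_def using j(4) by (intro exI[of _ j]) auto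
qed

lemma has_k: "has st w k T \<Longrightarrow> k \<le> k' \<Longrightarrow> has st w k' T"
  unfolding has_def by (blast intro: le_trans)

lemma has_trav[simp]: "has (st\<lparr>trav := X\<rparr>) = has st"
  by (simp add: has_def fun_eq_iff)

lemma sorted_le_last: "sorted xs \<Longrightarrow> x \<in> set xs \<Longrightarrow> x \<le> last xs"
proof -
  assume a: "sorted xs" "x \<in> set xs"
  then obtain i where i: "i < length xs" "x = xs ! i" by (auto simp: in_set_conv_nth)
  then have "xs \<noteq> []" by auto
  then have "last xs = xs ! (length xs - 1)" by (simp add: last_conv_nth)
  moreover have "xs ! i \<le> xs ! (length xs - 1)" using a(1) i(1) by (simp add: sorted_iff_nth_mono)
  ultimately show ?thesis using i by simp
qed

lemma path_single: "(s,v,t) \<in> E \<Longrightarrow> ts \<le> t \<Longrightarrow> temporal_path E ts s v [(s,v,t)] \<and> t_end [(s,v,t)] = t"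
  by (simp add: temporal_path_def t_end_def)

lemma path_snoc:
  assumes "temporal_path E ts s u P" "t_end P \<le> t" "(u,v,t) \<in> E"
  shows "temporal_path E ts s v (P @ [(u,v,t)]) \<and> t_end (P @ [(u,v,t)]) = t"
proof -
  have ne: "P \<noteq> []" and sub: "set P \<subseteq> E" and h: "src (hd P) = s" and l: "dst (last P) = u"
    and c: "\<forall>i. Suc i < length P \<longrightarrow> dst (P ! i) = src (P ! Suc i)"
    and t0: "ts \<le> tm (hd P)" and so: "sorted (map tm P)"
    using assms(1) by (auto simp: temporal_path_def)
  have c2: "\<forall>i. Suc i < length (P @ [(u,v,t)]) \<longrightarrow> dst ((P @ [(u,v,t)]) ! i) = src ((P @ [(u,v,t)]) ! Suc i)"
  proof (intro allI impI)
    fix i assume "Suc i < length (P @ [(u,v,t)])"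
    then have "i < length P" by simp
    show "dst ((P @ [(u,v,t)]) ! i) = src ((P @ [(u,v,t)]) ! Suc i)"
    proof (cases "Suc i < length P")
      case True then show ?thesis using c by (simp add: nth_append)
    next
      case False
      then have "i = length P - 1" using \<open>i < length P\<close> by simp
      then show ?thesis using l ne False \<open>i < length P\<close>
        by (simp add: nth_append last_conv_nth)
    qed
  qed
  have "\<forall>x\<in>set (map tm P). x \<le> t"
  proof
    fix x assume "x \<in> set (map tm P)"
    then have "x \<le> last (map tm P)" using so sorted_le_last by blast
    also have "last (map tm P) = t_end P" using ne by (simp add: t_end_def last_map)
    finally show "x \<le> t" using assms(2) by simp
  qed
  then have "sorted (map tm (P @ [(u,v,t)]))" using so by (simp add: sorted_append)
  then show ?thesis using ne sub h c2 t0 assms(3)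
    by (simp add: temporal_path_def t_end_def)
qed


lemma clos_trav[simp]: "clos E (st\<lparr>trav := X\<rparr>) = clos E st"
  by (simp add: clos_def fun_eq_iff)

lemma add_trav:
  assumes fi: "fi E s ts r R st" and R: "R = (u,du,sr,pr)" and e0: "(u,v,t) \<in> E" and srt: "sr \<le> t"
    and hv: "has st v (Suc du) t"
  shows "fi E s ts r R (st\<lparr>trav := insert (u,v,t) (trav st)\<rparr>)"
proof -
  have rl: "r < length (recs st)" "recs st ! r = R" "r \<notin> set (bq st)" using fi by (auto simp: fi_def)
  have qb: "\<forall>b\<in>set (bq st). du \<le> rlev (recs st ! b)" using fi R by (simp add: fi_def)
  have cl: "\<forall>a<length (recs st). a \<notin> set (bq st) \<and> a \<noteq> r \<longrightarrow> clos E st a" using fi by (simp add: fi_def)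
  have n1: "\<exists>a0<length (recs st). a0 \<notin> set (bq st) \<and> rvert (recs st ! a0) = u \<and> rtime (recs st ! a0) \<le> t"
    using rl R srt by auto
  have n2: "\<forall>a<length (recs st). rvert (recs st ! a) = u \<and> rtime (recs st ! a) \<le> t \<longrightarrow> has st v (Suc (rlev (recs st ! a))) t"
  proof (intro allI impI)
    fix a assume a: "a < length (recs st)" "rvert (recs st ! a) = u \<and> rtime (recs st ! a) \<le> t"
    show "has st v (Suc (rlev (recs st ! a))) t"
    proof (cases "du \<le> rlev (recs st ! a)")
      case True then show ?thesis using hv has_k by (metis Suc_le_mono)
    next
      case False
      then have "a \<notin> set (bq st)" using qb by auto
      moreover have "a \<noteq> r" using False rl R by auto
      ultimately have "clos E st a" using cl a by auto
      then show ?thesis using e0 a unfolding clos_def by fastforce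
    qed
  qed
  show ?thesis using fi n1 n2 unfolding fi_def base_def by simp
qed

lemma noimp_has:
  assumes fi: "fi E s ts r R st" and R: "R = (u,du,sr,pr)" and nlt: "\<not> ereal t < sig st v"
  shows "has st v (Suc du) t"
proof -
  have S2: "sig st v = \<infinity> \<or> (\<exists>a<length (recs st). rvert (recs st ! a) = v \<and> sig st v = ereal (rtime (recs st ! a)))"
    using fi by (simp add: fi_def base_def)
  have lv: "\<forall>a<length (recs st). rlev (recs st ! a) \<le> Suc du" using fi R by (simp add: fi_def)
  from nlt have "sig st v \<noteq> \<infinity>" by auto
  with S2 obtain a where a: "a<length (recs st)" "rvert (recs st ! a) = v" "sig st v = ereal (rtime (recs st ! a))" by blast
  then have "rtime (recs st ! a) \<le> t" using nlt by simp
  then show ?thesis unfolding has_def using a lv by blast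
qed


lemma base_facts:
  assumes "base E s ts st"
  shows "0 < length (recs st)" "recs st ! 0 = (s,0,ts,None)"
    "\<And>a. a<length (recs st) \<Longrightarrow> rvert (recs st ! a) = s \<Longrightarrow> a = 0"
    "sig st s = ereal ts"
    "\<And>a. a<length (recs st) \<Longrightarrow> ts \<le> rtime (recs st ! a)"
    "distinct (bq st)" "set (bq st) \<subseteq> {..<length (recs st)}"
    "\<And>a. a<length (recs st) \<Longrightarrow> sig st (rvert (recs st ! a)) \<le> ereal (rtime (recs st ! a))"
    "\<And>w. sig st w = \<infinity> \<or> (\<exists>a<length (recs st). rvert (recs st ! a) = w \<and> sig st w = ereal (rtime (recs st ! a)))"
    "\<And>a b. a<length (recs st) \<Longrightarrow> b<length (recs st) \<Longrightarrow> rvert (recs st ! a) = rvert (recs st ! b) \<Longrightarrow> rlev (recs st ! a) = rlev (recs st ! b) \<Longrightarrow> a = b"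
    "\<And>a b. a<length (recs st) \<Longrightarrow> b<length (recs st) \<Longrightarrow> rvert (recs st ! a) = rvert (recs st ! b) \<Longrightarrow> rlev (recs st ! a) < rlev (recs st ! b) \<Longrightarrow> rtime (recs st ! b) \<le> rtime (recs st ! a)"
    "\<And>a. a<length (recs st) \<Longrightarrow> rvert (recs st ! a) \<noteq> s \<Longrightarrow> (\<exists>P. temporal_path E ts s (rvert (recs st ! a)) P \<and> length P \<le> rlev (recs st ! a) \<and> t_end P = rtime (recs st ! a))"
    "\<And>e. e\<in>trav st \<Longrightarrow> (\<exists>a0<length (recs st). a0 \<notin> set (bq st) \<and> rvert (recs st ! a0) = src e \<and> rtime (recs st ! a0) \<le> tm e)"
    "\<And>e a. e\<in>trav st \<Longrightarrow> a<length (recs st) \<Longrightarrow> rvert (recs st ! a) = src e \<Longrightarrow> rtime (recs st ! a) \<le> tm e \<Longrightarrow> has st (dst e) (Suc (rlev (recs st ! a))) (tm e)"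
  using assms by (simp_all add: base_def)

lemma new_path:
  assumes B: "base E s ts st" and rl: "r < length (recs st)" and R: "recs st ! r = (u,du,sr,pr)"
    and e0: "(u,v,t) \<in> E" and srt: "sr \<le> t"
  shows "\<exists>P. temporal_path E ts s v P \<and> length P \<le> Suc du \<and> t_end P = t"
proof (cases "u = s")
  case True
  have "ts \<le> sr" using base_facts(5)[OF B rl] R by simp
  then show ?thesis using path_single[of s v t E ts] e0 True srt by (intro exI[of _ "[(s,v,t)]"]) auto
next
  case False
  then obtain P where P: "temporal_path E ts s u P" "length P \<le> du" "t_end P = sr"
    using base_facts(12)[OF B rl] R by auto
  then show ?thesis using path_snoc[OF P(1) _ e0] srt by (intro exI[of _ "P @ [(u,v,t)]"]) auto
qed


lemma clos_transfer:
  assumes c: "clos E st a" and ra: "recs st' ! a = recs st ! a" and m: "mono_st st st'"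
  shows "clos E st' a"
  unfolding clos_def
proof (intro ballI impI)
  fix e assume e: "e \<in> E" "src e = rvert (recs st' ! a) \<and> rtime (recs st' ! a) \<le> tm e"
  then have "has st (dst e) (Suc (rlev (recs st ! a))) (tm e)" using c ra unfolding clos_def by simp
  then show "has st' (dst e) (Suc (rlev (recs st' ! a))) (tm e)" using has_mono[OF _ m] ra by simp
qed


lemma create_ok:
  assumes fi: "fi E s ts r R st" and R: "R = (u,du,sr,pr)" and e0: "(u,v,t) \<in> E" and srt: "sr \<le> t"
    and lt: "ereal t < sig st v"
    and nolev: "\<not>(\<exists>i\<in>set (bq st). rvert (recs st ! i) = v \<and> rlev (recs st ! i) = Suc du)"
  defines "st' \<equiv> st\<lparr>recs := recs st @ [(v, Suc du, t, Some r)], bq := bq st @ [length (recs st)],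
     sig := (sig st)(v := ereal t)\<rparr>"
  shows "fi E s ts r R st' \<and> has st' v (Suc du) t \<and> mono_st st st'"
proof -
  define N where "N = length (recs st)"
  have B: "base E s ts st" and rl: "r < N" "recs st ! r = R" "r \<notin> set (bq st)"
    and so: "sorted (map (\<lambda>b. rlev (recs st ! b)) (bq st))"
    and qb: "\<forall>b\<in>set (bq st). du \<le> rlev (recs st ! b) \<and> rlev (recs st ! b) \<le> Suc du"
    and lv: "\<forall>a<N. rlev (recs st ! a) \<le> Suc du"
    and pl: "\<forall>a<N. a \<notin> set (bq st) \<longrightarrow> rlev (recs st ! a) \<le> du"
    and cl: "\<forall>a<N. a \<notin> set (bq st) \<and> a \<noteq> r \<longrightarrow> clos E st a"
    using fi R unfolding fi_def N_def by auto
  note bf = base_facts[OF B, folded N_def]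
  have tst: "ts \<le> t" using bf(5)[OF rl(1)] rl R srt by simp
  have vs: "v \<noteq> s" using lt bf(4) tst by auto
  have lenN: "length (recs st') = Suc N" by (simp add: st'_def N_def)
  have old: "\<And>a. a < N \<Longrightarrow> recs st' ! a = recs st ! a" by (simp add: st'_def N_def nth_append)
  have new: "recs st' ! N = (v, Suc du, t, Some r)" by (simp add: st'_def N_def)
  have bq': "bq st' = bq st @ [N]" and sig': "sig st' = (sig st)(v := ereal t)" and tr': "trav st' = trav st"
    by (simp_all add: st'_def N_def)
  have NQ: "N \<notin> set (bq st)" using bf(7) by auto
  have mono: "mono_st st st'" unfolding mono_st_def using lenN old by (simp add: N_def)
  have hasv: "has st' v (Suc du) t" unfolding has_def using lenN new by (intro exI[of _ N]) auto
  have lt2: "t < rtime (recs st ! a)" if a: "a < N" "rvert (recs st ! a) = v" for a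
  proof -
    have "sig st v \<le> ereal (rtime (recs st ! a))" using bf(8)[OF a(1)] a(2) by simp
    then have "ereal t < ereal (rtime (recs st ! a))" using lt by (rule less_le_trans[rotated])
    then show ?thesis by simp
  qed
  have all': "\<And>a. a < Suc N \<Longrightarrow> a < N \<or> a = N" by auto
  have base': "base E s ts st'"
    unfolding base_def
  proof (intro conjI allI impI ballI)
    show "0 < length (recs st')" using lenN by simp
    show "recs st' ! 0 = (s, 0, ts, None)" using old bf(1,2) by simp
  next
    fix a assume "a < length (recs st')" "rvert (recs st' ! a) = s"
    then show "a = 0" using old new vs bf(3) lenN all' by (metis rec_simps(1))
  next
    show "sig st' s = ereal ts" using sig' vs bf(4) by simp
  next
    fix a assume "a < length (recs st')"
    then show "ts \<le> rtime (recs st' ! a)" using old new tst bf(5) lenN all' by (metis rec_simps(3))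
  next
    show "distinct (bq st')" using bq' NQ bf(6) by simp
    show "set (bq st') \<subseteq> {..<length (recs st')}" using bq' bf(7) lenN by auto
  next
    fix a assume a: "a < length (recs st')"
    show "sig st' (rvert (recs st' ! a)) \<le> ereal (rtime (recs st' ! a))"
    proof (cases "a < N")
      case True
      then show ?thesis using old sig' bf(8) lt2[of a] by (cases "rvert (recs st ! a) = v") (auto simp: less_imp_le)
    next
      case False then have "a = N" using a lenN by simp
      then show ?thesis using new sig' by simp
    qed
  next
    fix w
    show "sig st' w = \<infinity> \<or> (\<exists>a<length (recs st'). rvert (recs st' ! a) = w \<and> sig st' w = ereal (rtime (recs st' ! a)))"
    proof (cases "w = v")
      case True then show ?thesis using new sig' lenN by (intro disjI2 exI[of _ N]) auto
    next
      case False then show ?thesis using bf(9)[of w] sig' old lenN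
        by (metis fun_upd_other less_SucI)
    qed
  next
    fix a b assume a: "a < length (recs st')" and b: "b < length (recs st')"
      and eq: "rvert (recs st' ! a) = rvert (recs st' ! b) \<and> rlev (recs st' ! a) = rlev (recs st' ! b)"
    have noN: "\<And>c. c < N \<Longrightarrow> rvert (recs st ! c) = v \<Longrightarrow> rlev (recs st ! c) = Suc du \<Longrightarrow> False"
      using nolev pl by (metis Suc_n_not_le_n)
    show "a = b"
    proof (cases "a < N")
      case True
      show ?thesis
      proof (cases "b < N")
        case True then show ?thesis using \<open>a < N\<close> eq old bf(10) by auto
      next
        case False then have "b = N" using b lenN by simp
        then show ?thesis using eq old new noN \<open>a < N\<close> by auto
      qed
    next
      case False then have aN: "a = N" using a lenN by simp
      show ?thesis
      proof (cases "b < N")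
        case True then show ?thesis using eq old new noN aN by auto
      next
        case False then show ?thesis using b lenN aN by simp
      qed
    qed
  next
    fix a b assume a: "a < length (recs st')" and b: "b < length (recs st')"
      and eq: "rvert (recs st' ! a) = rvert (recs st' ! b) \<and> rlev (recs st' ! a) < rlev (recs st' ! b)"
    show "rtime (recs st' ! b) \<le> rtime (recs st' ! a)"
    proof (cases "a < N")
      case True
      show ?thesis
      proof (cases "b < N")
        case True then show ?thesis using \<open>a < N\<close> eq old bf(11) by auto
      next
        case False then have "b = N" using b lenN by simp
        then show ?thesis using eq old new lt2 \<open>a < N\<close> by (metis less_imp_le rec_simps(1,3))
      qed
    next
      case False then have aN: "a = N" using a lenN by simp
      show ?thesis
      proof (cases "b < N")
        case True then show ?thesis using eq old new lv aN by (metis leD rec_simps(2))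
      next
        case False then have "b = N" using b lenN by simp
        then show ?thesis using aN eq by simp
      qed
    qed
  next
    fix a assume a: "a < length (recs st')" "rvert (recs st' ! a) \<noteq> s"
    show "\<exists>P. temporal_path E ts s (rvert (recs st' ! a)) P \<and> length P \<le> rlev (recs st' ! a) \<and> t_end P = rtime (recs st' ! a)"
    proof (cases "a < N")
      case True then show ?thesis using a old bf(12) by simp
    next
      case False then have "a = N" using a lenN by simp
      then show ?thesis using new new_path[OF B rl(1)[unfolded N_def] _ e0 srt] rl(2) R by simp
    qed
  next
    fix e assume e: "e \<in> trav st'"
    then have e': "e \<in> trav st" using tr' by simp
    obtain a0 where a0: "a0 < N" "a0 \<notin> set (bq st)" "rvert (recs st ! a0) = src e" "rtime (recs st ! a0) \<le> tm e"
      using bf(13)[OF e'] by blast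
    show "\<exists>a0<length (recs st'). a0 \<notin> set (bq st') \<and> rvert (recs st' ! a0) = src e \<and> rtime (recs st' ! a0) \<le> tm e"
      using a0 old bq' lenN by (intro exI[of _ a0]) auto
    have h0: "has st' (dst e) (Suc du) (tm e)"
      using has_mono[OF bf(14)[OF e' a0(1) a0(3,4)] mono] pl a0 has_k by (metis Suc_le_mono)
    fix a assume a: "a < length (recs st')" and ae: "rvert (recs st' ! a) = src e \<and> rtime (recs st' ! a) \<le> tm e"
    show "has st' (dst e) (Suc (rlev (recs st' ! a))) (tm e)"
    proof (cases "a < N")
      case True then show ?thesis using ae old has_mono[OF bf(14)[OF e'] mono] by simp
    next
      case False then have "a = N" using a lenN by simp
      then show ?thesis using new has_k[OF h0, of "Suc (Suc du)"] by simp
    qed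
  qed
  have fi': "fi E s ts r R st'"
    unfolding fi_def
  proof (intro conjI ballI allI impI)
    show "base E s ts st'" by (rule base')
    show "r < length (recs st')" using rl lenN by simp
    show "recs st' ! r = R" using rl old by simp
    show "r \<notin> set (bq st')" using bq' rl by auto
    have meq: "map (\<lambda>b. rlev (recs st' ! b)) (bq st) = map (\<lambda>b. rlev (recs st ! b)) (bq st)"
      using old bf(7) by (auto intro!: map_cong)
    have m1: "sorted (map (\<lambda>b. rlev (recs st' ! b)) (bq st))" unfolding meq by (rule so)
    have m2: "\<forall>x\<in>set (map (\<lambda>b. rlev (recs st' ! b)) (bq st)). x \<le> Suc du" unfolding meq using qb by auto
    show "sorted (map (\<lambda>b. rlev (recs st' ! b)) (bq st'))"
      unfolding bq' using m1 m2 new by (simp add: sorted_append)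
  next
    fix b assume "b \<in> set (bq st')"
    then have "b \<in> set (bq st) \<or> b = N" using bq' by auto
    then show "rlev R \<le> rlev (recs st' ! b)" "rlev (recs st' ! b) \<le> Suc (rlev R)"
      using qb old new R bf(7) by auto
  next
    fix a assume "a < length (recs st')"
    then show "rlev (recs st' ! a) \<le> Suc (rlev R)" using lv old new R lenN all' by (metis rec_simps(2) le_refl)
  next
    fix a assume "a < length (recs st')" "a \<notin> set (bq st')"
    then show "rlev (recs st' ! a) \<le> rlev R" using pl old R lenN bq' by auto
  next
    fix a assume a: "a < length (recs st')" "a \<notin> set (bq st') \<and> a \<noteq> r"
    then have aN: "a < N" "a \<notin> set (bq st)" using lenN bq' by auto
    then have "clos E st a" using cl a by auto
    moreover have ra: "recs st' ! a = recs st ! a" using old aN(1) by simp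
    ultimately show "clos E st' a" using clos_transfer mono by blast
  qed
  show ?thesis using fi' hasv mono by simp
qed



lemma update_ok:
  assumes fi: "fi E s ts r R st" and R: "R = (u,du,sr,pr)" and e0: "(u,v,t) \<in> E" and srt: "sr \<le> t"
    and lt: "ereal t < sig st v"
    and iq: "i \<in> set (bq st)" and iv: "rvert (recs st ! i) = v" and il: "rlev (recs st ! i) = Suc du"
  defines "st' \<equiv> st\<lparr>recs := (recs st)[i := (v, Suc du, t, Some r)], sig := (sig st)(v := ereal t)\<rparr>"
  shows "fi E s ts r R st' \<and> has st' v (Suc du) t \<and> mono_st st st'"
proof -
  define N where "N = length (recs st)"
  have B: "base E s ts st" and rl: "r < N" "recs st ! r = R" "r \<notin> set (bq st)"
    and so: "sorted (map (\<lambda>b. rlev (recs st ! b)) (bq st))"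
    and qb: "\<forall>b\<in>set (bq st). du \<le> rlev (recs st ! b) \<and> rlev (recs st ! b) \<le> Suc du"
    and lv: "\<forall>a<N. rlev (recs st ! a) \<le> Suc du"
    and pl: "\<forall>a<N. a \<notin> set (bq st) \<longrightarrow> rlev (recs st ! a) \<le> du"
    and cl: "\<forall>a<N. a \<notin> set (bq st) \<and> a \<noteq> r \<longrightarrow> clos E st a"
    using fi R unfolding fi_def N_def by auto
  note bf = base_facts[OF B, folded N_def]
  have iN: "i < N" using iq bf(7) by auto
  have tst: "ts \<le> t" using bf(5)[OF rl(1)] rl R srt by simp
  have vs: "v \<noteq> s" using lt bf(4) tst by auto
  have lenN: "length (recs st') = N" by (simp add: st'_def N_def)
  have old: "\<And>a. a \<noteq> i \<Longrightarrow> recs st' ! a = recs st ! a" by (simp add: st'_def)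
  have new: "recs st' ! i = (v, Suc du, t, Some r)" using iN by (simp add: st'_def N_def)
  have bq': "bq st' = bq st" and sig': "sig st' = (sig st)(v := ereal t)" and tr': "trav st' = trav st"
    by (simp_all add: st'_def)
  have lt2: "t < rtime (recs st ! a)" if a: "a < N" "rvert (recs st ! a) = v" for a
  proof -
    have "sig st v \<le> ereal (rtime (recs st ! a))" using bf(8)[OF a(1)] a(2) by simp
    then have "ereal t < ereal (rtime (recs st ! a))" using lt by (rule less_le_trans[rotated])
    then show ?thesis by simp
  qed
  have vl: "\<And>a. a < N \<Longrightarrow> rvert (recs st' ! a) = rvert (recs st ! a) \<and> rlev (recs st' ! a) = rlev (recs st ! a)"
    using old new iv il by (metis rec_simps(1,2))
  have tmi: "rtime (recs st' ! j) \<le> rtime (recs st ! j)" if "j < N" for j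
  proof (cases "j = i")
    case True then show ?thesis using new lt2[OF iN iv] by simp
  next
    case False then show ?thesis using old by simp
  qed
  have mono: "mono_st st st'" unfolding mono_st_def using lenN vl tmi by (simp add: N_def)
  have hasv: "has st' v (Suc du) t" unfolding has_def using lenN new iN by (intro exI[of _ i]) auto
  have i0: "i \<noteq> 0"
  proof
    assume "i = 0" then show False using iv vs bf(2) by simp
  qed
  have ir: "i \<noteq> r" using iq rl by auto
  have base': "base E s ts st'"
    unfolding base_def
  proof (intro conjI allI impI ballI)
    show "0 < length (recs st')" using lenN bf(1) by simp
    show "recs st' ! 0 = (s, 0, ts, None)" using old bf(2) i0 by simp
  next
    fix a assume "a < length (recs st')" "rvert (recs st' ! a) = s"
    then show "a = 0" using vl bf(3) lenN by auto
  next
    show "sig st' s = ereal ts" using sig' vs bf(4) by simp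
  next
    fix a assume "a < length (recs st')"
    then show "ts \<le> rtime (recs st' ! a)" using old new tst bf(5) lenN by (cases "a = i") auto
  next
    show "distinct (bq st')" using bq' bf(6) by simp
    show "set (bq st') \<subseteq> {..<length (recs st')}" using bq' bf(7) lenN by auto
  next
    fix a assume a: "a < length (recs st')"
    show "sig st' (rvert (recs st' ! a)) \<le> ereal (rtime (recs st' ! a))"
    proof (cases "a = i")
      case False
      then show ?thesis using a lenN old sig' bf(8) lt2[of a] by (cases "rvert (recs st ! a) = v") (auto simp: less_imp_le)
    next
      case True
      then show ?thesis using new sig' by simp
    qed
  next
    fix w
    show "sig st' w = \<infinity> \<or> (\<exists>a<length (recs st'). rvert (recs st' ! a) = w \<and> sig st' w = ereal (rtime (recs st' ! a)))"
    proof (cases "w = v")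
      case True then show ?thesis using new sig' lenN iN by (intro disjI2 exI[of _ i]) auto
    next
      case False
      then have "sig st' w = sig st w" using sig' by simp
      moreover have "\<And>a. a < N \<Longrightarrow> rvert (recs st ! a) = w \<Longrightarrow> recs st' ! a = recs st ! a"
        using False iv old by metis
      ultimately show ?thesis using bf(9)[of w] lenN by metis
    qed
  next
    fix a b assume a: "a < length (recs st')" and b: "b < length (recs st')"
      and eq: "rvert (recs st' ! a) = rvert (recs st' ! b) \<and> rlev (recs st' ! a) = rlev (recs st' ! b)"
    then show "a = b" using vl bf(10) lenN by auto
  next
    fix a b assume a: "a < length (recs st')" and b: "b < length (recs st')"
      and eq: "rvert (recs st' ! a) = rvert (recs st' ! b) \<and> rlev (recs st' ! a) < rlev (recs st' ! b)"
    show "rtime (recs st' ! b) \<le> rtime (recs st' ! a)"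
    proof (cases "b = i")
      case True
      then have "a \<noteq> i" using eq by auto
      then show ?thesis using True eq old new lt2 a lenN by (metis less_imp_le rec_simps(1,3))
    next
      case False
      show ?thesis
      proof (cases "a = i")
        case True then show ?thesis using eq vl lv b lenN new il by (metis leD rec_simps(2))
      next
        case False then show ?thesis using \<open>b \<noteq> i\<close> eq old bf(11) a b lenN by auto
      qed
    qed
  next
    fix a assume a: "a < length (recs st')" "rvert (recs st' ! a) \<noteq> s"
    show "\<exists>P. temporal_path E ts s (rvert (recs st' ! a)) P \<and> length P \<le> rlev (recs st' ! a) \<and> t_end P = rtime (recs st' ! a)"
    proof (cases "a = i")
      case False then show ?thesis using a old bf(12) lenN by simp
    next
      case True
      then show ?thesis using new new_path[OF B rl(1)[unfolded N_def] _ e0 srt] rl(2) R by simp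
    qed
  next
    fix e assume e: "e \<in> trav st'"
    then have e': "e \<in> trav st" using tr' by simp
    obtain a0 where a0: "a0 < N" "a0 \<notin> set (bq st)" "rvert (recs st ! a0) = src e" "rtime (recs st ! a0) \<le> tm e"
      using bf(13)[OF e'] by blast
    have a0i: "a0 \<noteq> i" using a0 iq by auto
    show "\<exists>a0<length (recs st'). a0 \<notin> set (bq st') \<and> rvert (recs st' ! a0) = src e \<and> rtime (recs st' ! a0) \<le> tm e"
      using a0 a0i old bq' lenN by (intro exI[of _ a0]) auto
    have h0: "has st' (dst e) (Suc du) (tm e)"
      using has_mono[OF bf(14)[OF e' a0(1) a0(3,4)] mono] pl a0 has_k by (metis Suc_le_mono)
    fix a assume a: "a < length (recs st')" and ae: "rvert (recs st' ! a) = src e \<and> rtime (recs st' ! a) \<le> tm e"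
    show "has st' (dst e) (Suc (rlev (recs st' ! a))) (tm e)"
    proof (cases "a = i")
      case False then show ?thesis using a lenN ae old has_mono[OF bf(14)[OF e'] mono] by simp
    next
      case True
      then show ?thesis using new has_k[OF h0, of "Suc (Suc du)"] by simp
    qed
  qed
  have fi': "fi E s ts r R st'"
    unfolding fi_def
  proof (intro conjI ballI allI impI)
    show "base E s ts st'" by (rule base')
    show "r < length (recs st')" using rl lenN by simp
    show "recs st' ! r = R" using rl old ir by simp
    show "r \<notin> set (bq st')" using bq' rl by auto
    have meq: "map (\<lambda>b. rlev (recs st' ! b)) (bq st) = map (\<lambda>b. rlev (recs st ! b)) (bq st)"
      using vl bf(7) by (auto intro!: map_cong)
    show "sorted (map (\<lambda>b. rlev (recs st' ! b)) (bq st'))"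
      unfolding bq' meq by (rule so)
  next
    fix b assume "b \<in> set (bq st')"
    then show "rlev R \<le> rlev (recs st' ! b)" "rlev (recs st' ! b) \<le> Suc (rlev R)"
      using qb vl R bf(7) bq' by auto
  next
    fix a assume "a < length (recs st')"
    then show "rlev (recs st' ! a) \<le> Suc (rlev R)" using lv vl R lenN by auto
  next
    fix a assume "a < length (recs st')" "a \<notin> set (bq st')"
    then show "rlev (recs st' ! a) \<le> rlev R" using pl vl R lenN bq' by auto
  next
    fix a assume a: "a < length (recs st')" "a \<notin> set (bq st') \<and> a \<noteq> r"
    then have aN: "a < N" "a \<notin> set (bq st)" using lenN bq' by auto
    then have "a \<noteq> i" using iq by auto
    have "clos E st a" using cl a aN by auto
    moreover have ra: "recs st' ! a = recs st ! a" using old \<open>a \<noteq> i\<close> by simp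
    ultimately show "clos E st' a" using clos_transfer mono by blast
  qed
  show ?thesis using fi' hasv mono by simp
qed



lemma mono_st_trav[simp]: "mono_st st (st'\<lparr>trav := X\<rparr>) = mono_st st st'"
  by (simp add: mono_st_def)

lemma handle_ok:
  assumes fi: "fi E s ts r R st" and R: "R = (u,du,sr,pr)" and fB: "finite B" and BE: "B \<subseteq> E"
    and Bs: "\<forall>e\<in>B. src e = u \<and> sr \<le> tm e" and vB: "v \<in> dst ` B"
  shows "fi E s ts r R (handle B r v st) \<and> has (handle B r v st) v (Suc du) (Min {tm e |e. e \<in> B \<and> dst e = v})
     \<and> mono_st st (handle B r v st)"
proof -
  define t where "t = Min {tm e |e. e \<in> B \<and> dst e = v}"
  have seq: "{tm e |e. e \<in> B \<and> dst e = v} = tm ` {e \<in> B. dst e = v}" by (rule setcompr_eq_image)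
  have "finite (tm ` {e \<in> B. dst e = v})" using fB by simp
  moreover have "tm ` {e \<in> B. dst e = v} \<noteq> {}"
  proof -
    obtain e where "e \<in> B" "v = dst e" using vB by blast
    then have "tm e \<in> tm ` {e \<in> B. dst e = v}" by blast
    then show ?thesis by blast
  qed
  ultimately have "t \<in> tm ` {e \<in> B. dst e = v}" unfolding t_def seq by (rule Min_in)
  then obtain e0 where e0: "e0 \<in> B" "dst e0 = v" "tm e0 = t" by auto
  have e0eq: "e0 = (u,v,t)" using e0 Bs edge_eta[of e0] by auto
  have e0E: "(u,v,t) \<in> E" using e0 e0eq BE by auto
  have srt: "sr \<le> t" using Bs e0 by auto
  have rr: "rvert (recs st ! r) = u" "rlev (recs st ! r) = du" using fi R by (auto simp: fi_def)
  show ?thesis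
  proof (cases "ereal t < sig st v")
    case False
    have h: "handle B r v st = st\<lparr>trav := insert (u, v, t) (trav st)\<rparr>"
      using handle_noimp[OF False t_def] rr by simp
    show ?thesis unfolding h t_def[symmetric]
      using add_trav[OF fi R e0E srt noimp_has[OF fi R False]] noimp_has[OF fi R False]
      by (simp add: mono_st_refl)
  next
    case lt: True
    show ?thesis
    proof (cases "\<exists>i\<in>set (bq st). rvert (recs st ! i) = v \<and> rlev (recs st ! i) = Suc du")
      case True
      define i where "i = (SOME i. i \<in> set (bq st) \<and> rvert (recs st ! i) = v \<and> rlev (recs st ! i) = Suc du)"
      have ispec: "i \<in> set (bq st)" "rvert (recs st ! i) = v" "rlev (recs st ! i) = Suc du"
        using someI_ex[of "\<lambda>i. i \<in> set (bq st) \<and> rvert (recs st ! i) = v \<and> rlev (recs st ! i) = Suc du"] True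
        unfolding i_def by auto
      define st' where "st' = st\<lparr>recs := (recs st)[i := (v, Suc du, t, Some r)], sig := (sig st)(v := ereal t)\<rparr>"
      have h: "handle B r v st = st'\<lparr>trav := insert (u, v, t) (trav st')\<rparr>"
        using handle_update[OF lt t_def _ ] True rr unfolding st'_def i_def by simp
      have U: "fi E s ts r R st' \<and> has st' v (Suc du) t \<and> mono_st st st'"
        using update_ok[OF fi R e0E srt lt ispec] unfolding st'_def .
      show ?thesis unfolding h t_def[symmetric] using U add_trav[OF _ R e0E srt] by simp
    next
      case False
      define st' where "st' = st\<lparr>recs := recs st @ [(v, Suc du, t, Some r)], bq := bq st @ [length (recs st)],
        sig := (sig st)(v := ereal t)\<rparr>"
      have h: "handle B r v st = st'\<lparr>trav := insert (u, v, t) (trav st')\<rparr>"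
        using handle_create[OF lt t_def] False rr unfolding st'_def by simp
      have U: "fi E s ts r R st' \<and> has st' v (Suc du) t \<and> mono_st st st'"
        using create_ok[OF fi R e0E srt lt False] unfolding st'_def .
      show ?thesis unfolding h t_def[symmetric] using U add_trav[OF _ R e0E srt] by simp
    qed
  qed
qed

lemma fold_gen:
  assumes H: "\<And>st v. Q st \<Longrightarrow> v \<in> A \<Longrightarrow> Q (f v st) \<and> has (f v st) v k (g v) \<and> mono_st st (f v st)"
  shows "Q st \<Longrightarrow> set vs \<subseteq> A \<Longrightarrow>
    Q (fold f vs st) \<and> mono_st st (fold f vs st) \<and> (\<forall>v\<in>set vs. has (fold f vs st) v k (g v))"
proof (induction vs arbitrary: st)
  case Nil
  then show ?case by (simp add: mono_st_refl)
next
  case (Cons v vs)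
  have H1: "Q (f v st)" "has (f v st) v k (g v)" "mono_st st (f v st)"
    using H[OF Cons.prems(1)] Cons.prems(2) by auto
  have IH: "Q (fold f vs (f v st)) \<and> mono_st (f v st) (fold f vs (f v st)) \<and>
      (\<forall>w\<in>set vs. has (fold f vs (f v st)) w k (g w))"
    using Cons.IH[OF H1(1)] Cons.prems(2) by simp
  have eq: "fold f (v # vs) st = fold f vs (f v st)" by simp
  have m: "mono_st st (fold f (v # vs) st)" unfolding eq using mono_st_trans[OF H1(3)] IH by simp
  have hv: "has (fold f (v # vs) st) v k (g v)" unfolding eq using has_mono[OF H1(2)] IH by simp
  show ?case unfolding eq using IH m[unfolded eq] hv[unfolded eq] by simp
qed

lemma fold_ok:
  assumes R: "R = (u,du,sr,pr)" and fB: "finite B" and BE: "B \<subseteq> E"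
    and Bs: "\<forall>e\<in>B. src e = u \<and> sr \<le> tm e"
  shows "fi E s ts r R st \<Longrightarrow> set vs \<subseteq> dst ` B \<Longrightarrow>
    fi E s ts r R (fold (handle B r) vs st) \<and> mono_st st (fold (handle B r) vs st) \<and>
    (\<forall>v\<in>set vs. has (fold (handle B r) vs st) v (Suc du) (Min {tm e |e. e \<in> B \<and> dst e = v}))"
  by (rule fold_gen[where Q="fi E s ts r R" and A="dst ` B" and g="\<lambda>v. Min {tm e |e. e \<in> B \<and> dst e = v}"])
     (use handle_ok[OF _ R fB BE Bs] in auto)



lemma handle_trav: "trav st \<subseteq> trav (handle B r v st)"
  by (auto simp: handle_def Let_def)

lemma fold_trav_gen: "(\<And>st v. trav st \<subseteq> trav (f v st)) \<Longrightarrow> trav st \<subseteq> trav (fold f vs st)"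
proof (induction vs arbitrary: st)
  case Nil then show ?case by simp
next
  case (Cons v vs)
  have "trav st \<subseteq> trav (f v st)" by (rule Cons.prems)
  also have "\<dots> \<subseteq> trav (fold f vs (f v st))" by (rule Cons.IH[OF Cons.prems])
  finally show ?case by simp
qed

lemma fold_trav: "trav st \<subseteq> trav (fold (handle B r) vs st)"
  by (rule fold_trav_gen) (rule handle_trav)

lemma base_bq:
  assumes b: "base E s ts st" and d: "distinct rest" and sub: "set rest \<subseteq> set (bq st)"
    and eqs: "recs st' = recs st" "sig st' = sig st" "trav st' = trav st" "bq st' = rest"
  shows "base E s ts st'"
proof -
  note bf = base_facts[OF b]
  have tr: "\<forall>e\<in>trav st. (\<exists>a0<length (recs st). a0 \<notin> set rest \<and> rvert (recs st ! a0) = src e \<and> rtime (recs st ! a0) \<le> tm e) \<and>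
      (\<forall>a<length (recs st). rvert (recs st ! a) = src e \<and> rtime (recs st ! a) \<le> tm e \<longrightarrow> has st (dst e) (Suc (rlev (recs st ! a))) (tm e))"
  proof (intro ballI conjI allI impI)
    fix e assume e: "e \<in> trav st"
    from bf(13)[OF e] obtain a0 where a0: "a0<length (recs st)" "a0 \<notin> set (bq st)" "rvert (recs st ! a0) = src e" "rtime (recs st ! a0) \<le> tm e"
      by blast
    then show "\<exists>a0<length (recs st). a0 \<notin> set rest \<and> rvert (recs st ! a0) = src e \<and> rtime (recs st ! a0) \<le> tm e"
      using sub by blast
  next
    fix e a assume "e \<in> trav st" "a < length (recs st)" "rvert (recs st ! a) = src e \<and> rtime (recs st ! a) \<le> tm e"
    then show "has st (dst e) (Suc (rlev (recs st ! a))) (tm e)" using bf(14) by blast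
  qed
  have hs: "has st' = has st" by (simp add: has_def fun_eq_iff eqs)
  have sr: "set rest \<subseteq> {..<length (recs st)}" using sub bf(7) by blast
  show ?thesis unfolding base_def eqs hs
    using b d sr tr unfolding base_def
    apply -
    apply (elim conjE)
    apply (intro conjI)
    apply assumption+
    done
qed

lemma has_T: "has st w k T \<Longrightarrow> T \<le> T' \<Longrightarrow> has st w k T'"
  unfolding has_def by (blast intro: order_trans)

lemma init_ok: "binv E s ts (tbfs_init s ts)"
  by (auto simp: binv_def base_def tbfs_init_def clos_def)

lemma step_ok:
  assumes I: "binv E s ts st" and S: "tbfs_step E st st'" and fE: "finite E"
  shows "binv E s ts st'"
  using S
proof cases
  case (1 r rest B vs)
  obtain u du sr pr where R: "recs st ! r = (u,du,sr,pr)" by (metis prod_cases4)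
  define st0 where "st0 = st\<lparr>bq := rest\<rparr>"
  have Bs: "base E s ts st" using I by (simp add: binv_def)
  note bf = base_facts[OF Bs]
  have so: "sorted (map (\<lambda>b. rlev (recs st ! b)) (bq st))"
    and i7: "\<forall>a<length (recs st). \<forall>b\<in>set (bq st). rlev (recs st ! a) \<le> Suc (rlev (recs st ! b))"
    and i8: "\<forall>a<length (recs st). a \<notin> set (bq st) \<longrightarrow> (\<forall>b\<in>set (bq st). rlev (recs st ! a) \<le> rlev (recs st ! b))"
    and i9: "\<forall>a<length (recs st). a \<notin> set (bq st) \<longrightarrow> clos E st a"
    using I by (auto simp: binv_def)
  have rl: "r < length (recs st)" using bf(7) 1 by auto
  have rn: "r \<notin> set rest" using bf(6) 1 by auto
  have lr: "rlev (recs st ! r) = du" using R by simp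
  have fi0: "fi E s ts r (u,du,sr,pr) st0"
    unfolding fi_def
  proof (intro conjI allI impI ballI)
    show "base E s ts st0" unfolding st0_def
      using base_bq[OF Bs, of rest "st\<lparr>bq := rest\<rparr>"] bf(6) 1 by auto
    show "r < length (recs st0)" using rl by (simp add: st0_def)
    show "recs st0 ! r = (u, du, sr, pr)" using R by (simp add: st0_def)
    show "r \<notin> set (bq st0)" using rn by (simp add: st0_def)
    show "sorted (map (\<lambda>b. rlev (recs st0 ! b)) (bq st0))" using so 1 by (simp add: st0_def)
  next
    fix b assume "b \<in> set (bq st0)"
    then have b: "b \<in> set rest" by (simp add: st0_def)
    show "rlev (u, du, sr, pr) \<le> rlev (recs st0 ! b)" using so 1 b lr by (simp add: st0_def)
    show "rlev (recs st0 ! b) \<le> Suc (rlev (u, du, sr, pr))"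
      using i7 1 b lr bf(7) by (auto simp: st0_def)
  next
    fix a assume "a < length (recs st0)"
    then show "rlev (recs st0 ! a) \<le> Suc (rlev (u, du, sr, pr))" using i7 1 lr by (auto simp: st0_def)
  next
    fix a assume a: "a < length (recs st0)" "a \<notin> set (bq st0)"
    show "rlev (recs st0 ! a) \<le> rlev (u, du, sr, pr)"
    proof (cases "a = r")
      case True then show ?thesis using lr by (simp add: st0_def)
    next
      case False then show ?thesis using i8 a 1 lr by (auto simp: st0_def)
    qed
  next
    fix a assume a: "a < length (recs st0)" "a \<notin> set (bq st0) \<and> a \<noteq> r"
    then have "clos E st a" using i9 1 by (auto simp: st0_def)
    then show "clos E st0 a" by (simp add: clos_def has_def st0_def)
  qed
  have fB: "finite B" using 1 fE by simp
  have BE: "B \<subseteq> E" using 1 by auto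
  have Bs2: "\<forall>e\<in>B. src e = u \<and> sr \<le> tm e" using 1 R by simp
  have F: "fi E s ts r (u,du,sr,pr) st' \<and> mono_st st0 st' \<and>
    (\<forall>v\<in>set vs. has st' v (Suc du) (Min {tm e |e. e \<in> B \<and> dst e = v}))"
    using fold_ok[OF refl fB BE Bs2 fi0, of vs] 1 unfolding st0_def by simp
  have tr: "trav st \<subseteq> trav st'" using fold_trav[of "st0"] 1 by (simp add: st0_def)
  have Bs': "base E s ts st'" and rl': "r < length (recs st')" "recs st' ! r = (u,du,sr,pr)" "r \<notin> set (bq st')"
    and so': "sorted (map (\<lambda>b. rlev (recs st' ! b)) (bq st'))"
    and qb: "\<forall>b\<in>set (bq st'). du \<le> rlev (recs st' ! b) \<and> rlev (recs st' ! b) \<le> Suc du"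
    and lv: "\<forall>a<length (recs st'). rlev (recs st' ! a) \<le> Suc du"
    and pl: "\<forall>a<length (recs st'). a \<notin> set (bq st') \<longrightarrow> rlev (recs st' ! a) \<le> du"
    and cl: "\<forall>a<length (recs st'). a \<notin> set (bq st') \<and> a \<noteq> r \<longrightarrow> clos E st' a"
    using F unfolding fi_def by auto
  have clr: "clos E st' r"
    unfolding clos_def
  proof (intro ballI impI)
    fix e assume e: "e \<in> E" "src e = rvert (recs st' ! r) \<and> rtime (recs st' ! r) \<le> tm e"
    show "has st' (dst e) (Suc (rlev (recs st' ! r))) (tm e)"
    proof (cases "e \<in> trav st")
      case True
      then have "e \<in> trav st'" using tr by blast
      show ?thesis by (rule base_facts(14)[OF Bs' \<open>e \<in> trav st'\<close> rl'(1)]) (use e in auto)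
    next
      case False
      then have eB: "e \<in> B" using 1 e R rl' by simp
      then have "dst e \<in> set vs" using 1 by auto
      then have h: "has st' (dst e) (Suc du) (Min {tm e' |e'. e' \<in> B \<and> dst e' = dst e})" using F by blast
      have "finite {tm e' |e'. e' \<in> B \<and> dst e' = dst e}"
        unfolding setcompr_eq_image using fB by simp
      moreover have "tm e \<in> {tm e' |e'. e' \<in> B \<and> dst e' = dst e}" using eB by blast
      ultimately have "Min {tm e' |e'. e' \<in> B \<and> dst e' = dst e} \<le> tm e" by (rule Min_le)
      then show ?thesis using has_T[OF h] rl' by simp
    qed
  qed
  show ?thesis unfolding binv_def
  proof (intro conjI allI impI ballI)
    show "base E s ts st'" by (rule Bs')
    show "sorted (map (\<lambda>b. rlev (recs st' ! b)) (bq st'))" by (rule so')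
  next
    fix a b assume "a < length (recs st')" "b \<in> set (bq st')"
    then show "rlev (recs st' ! a) \<le> Suc (rlev (recs st' ! b))" using lv qb by fastforce
  next
    fix a b assume "a < length (recs st')" "a \<notin> set (bq st')" "b \<in> set (bq st')"
    then show "rlev (recs st' ! a) \<le> rlev (recs st' ! b)" using pl qb by fastforce
  next
    fix a assume "a < length (recs st')" "a \<notin> set (bq st')"
    then show "clos E st' a" using cl clr by (cases "a = r") auto
  qed
qed

lemma reach_inv:
  assumes "(tbfs_step E)\<^sup>*\<^sup>* (tbfs_init s ts) st" "finite E"
  shows "binv E s ts st"
  using assms(1)
proof (induction rule: rtranclp_induct)
  case base then show ?case by (rule init_ok)
next
  case (step y z) show ?case by (rule step_ok[OF step.IH step.hyps(2) assms(2)])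
qed

theorem lemma13:
  fixes E :: "'v tedge set" and s v :: 'v and ts \<tau> :: real and d i :: nat
    and st :: "'v bstate" and p :: "nat option"
  assumes "finite E"
    and "\<forall>e\<in>E. src e \<noteq> dst e"
    and "(tbfs_step E)\<^sup>*\<^sup>* (tbfs_init s ts) st"
    and "bq st = []"
    and "i < length (recs st)"
    and "recs st ! i = (v, d, \<tau>, p)"
    and "v \<noteq> s"
  shows "(\<exists>P. temporal_path E ts s v P \<and> length P \<le> d \<and> t_end P = \<tau>) \<and>
         (\<forall>P. temporal_path E ts s v P \<and> length P \<le> d \<longrightarrow> \<tau> \<le> t_end P)"
proof -
  have I: "binv E s ts st" by (rule reach_inv[OF assms(3,1)])
  have Bs: "base E s ts st" using I by (simp add: binv_def)
  note bf = base_facts[OF Bs]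
  have cl: "\<And>a. a < length (recs st) \<Longrightarrow> clos E st a" using I assms(4) by (simp add: binv_def)
  have ex: "\<exists>P. temporal_path E ts s v P \<and> length P \<le> d \<and> t_end P = \<tau>"
    using bf(12)[OF assms(5)] assms(6,7) by simp
  have mn: "\<tau> \<le> t_end P" if P: "temporal_path E ts s v P" "length P \<le> d" for P
  proof -
    have ne: "P \<noteq> []" and sub: "set P \<subseteq> E" and h: "src (hd P) = s" and l: "dst (last P) = v"
      and c: "\<forall>i. Suc i < length P \<longrightarrow> dst (P ! i) = src (P ! Suc i)"
      and t0: "ts \<le> tm (hd P)" and so: "sorted (map tm P)"
      using P(1) by (auto simp: temporal_path_def)
    have key: "j < length P \<Longrightarrow> has st (dst (P ! j)) (Suc j) (tm (P ! j))" for j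
    proof (induction j)
      case 0
      have "P ! 0 \<in> E" using sub 0 by auto
      moreover have "src (P ! 0) = rvert (recs st ! 0) \<and> rtime (recs st ! 0) \<le> tm (P ! 0)"
        using h t0 bf(2) ne by (simp add: hd_conv_nth)
      ultimately show ?case using cl[OF bf(1)] bf(2) unfolding clos_def by fastforce
    next
      case (Suc j)
      then have "has st (dst (P ! j)) (Suc j) (tm (P ! j))" by simp
      then obtain k where k: "k < length (recs st)" "rvert (recs st ! k) = dst (P ! j)"
        "rlev (recs st ! k) \<le> Suc j" "rtime (recs st ! k) \<le> tm (P ! j)" unfolding has_def by blast
      have "tm (P ! j) \<le> tm (P ! Suc j)" using so Suc.prems by (simp add: sorted_iff_nth_mono)
      moreover have "P ! Suc j \<in> E" using sub Suc.prems by auto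
      moreover have "src (P ! Suc j) = dst (P ! j)" using c Suc.prems by simp
      ultimately have "has st (dst (P ! Suc j)) (Suc (rlev (recs st ! k))) (tm (P ! Suc j))"
        using cl[OF k(1)] k unfolding clos_def by auto
      then show ?case using has_k k(3) by (metis Suc_le_mono)
    qed
    have "has st (dst (P ! (length P - 1))) (Suc (length P - 1)) (tm (P ! (length P - 1)))"
      using key[of "length P - 1"] ne by simp
    moreover have "P ! (length P - 1) = last P" using ne by (simp add: last_conv_nth)
    ultimately have "has st v (length P) (t_end P)" using l ne by (simp add: t_end_def)
    then obtain k where k: "k < length (recs st)" "rvert (recs st ! k) = v"
        "rlev (recs st ! k) \<le> length P" "rtime (recs st ! k) \<le> t_end P" unfolding has_def by blast
    show ?thesis
    proof (cases "rlev (recs st ! k) = d")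
      case True
      then have "k = i" using bf(10)[OF k(1) assms(5)] k assms(6) by simp
      then show ?thesis using k assms(6) by simp
    next
      case False
      then have "rlev (recs st ! k) < d" using k(3) P(2) by simp
      then have "rtime (recs st ! i) \<le> rtime (recs st ! k)" using bf(11)[OF k(1) assms(5)] k assms(6) by simp
      then show ?thesis using k assms(6) by simp
    qed
  qed
  show ?thesis using ex mn by blast
qed


end
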